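(* Fix $x_0$, $\tau\in(0,1)$, $v\in B(0,\rho_{\max})$. There exist a finite positive constant $\beta_1'(x_0)$ and, for each $i\in\{2,\dots,T\}$, a finite set $\mathcal{L}_i'$ of sequences of non-negative integers of length $i-1$ and finite positive constants $\beta_i'^{(j_1,\dots,j_{i-1})}(x_0)$, not depending on $\epsilon$, the control or the observations, such that for every nominal control $u\in U$ left continuous at $\tau$ (with nominal trajectory $x$), every $(y_1,\dots,y_T)$ and every $\epsilon\in[0,\tau]$: $$|c(x_1^\epsilon(t),u^\epsilon(t))-c(x_1(t),u(t))|\le\epsilon\,\beta_1'(x_0)\quad\forall t\in(\tau,1],$$ and for all $i\in\{2,\dots,T\}$ and $t\in[i-1,i]$, $$|c(x_i^\epsilon(t),u^\epsilon(t))-c(x_i(t),u(t))|\le\epsilon\sum_{(j_1,\dots,j_{i-1})\in\mathcal{L}_i'}\beta_i'^{(j_1,\dots,j_{i-1})}(x_0)\prod_{m=1}^{i-1}\|y_m\|_2^{j_m}.$$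
   Context: Fix positive integers $T,m,n_x,n_y$ and $\rho_{\max}\in(0,\infty)$; $B(0,\rho_{\max})$ is the closed Euclidean ball of radius $\rho_{\max}$ in $\mathbb{R}^m$; $U$ is the set of piecewise continuous $u:[0,T]\to\mathbb{R}^m$ with $\|u(t)\|_2\le\rho_{\max}$ for all $t$. $f:\mathbb{R}^{n_x}\times\mathbb{R}^m\to\mathbb{R}^{n_x}$ is continuously differentiable and there is $K_1\in[1,\infty)$ with $\|f(x',u')-f(x'',u'')\|_2\le K_1(\|x'-x''\|_2+\|u'-u''\|_2)$ for all $x',x''$ and $u',u''\in B(0,\rho_{\max})$. $g:\mathbb{R}^{n_x}\times\mathbb{R}^{n_y}\to\mathbb{R}^{n_x}$ is continuous and differentiable in its first argument, and there are $K_2,\dots,K_5\ge0$ and positive integers $L_1,L_2$ such that for all $x,y$ both $\|g(x,y)\|_2$ and $\|\frac{\partial}{\partial x}g(x,y)\|_2$ are at most $K_2+K_3\|x\|_2^{L_1}+K_4\|y\|_2^{L_2}+K_5\|x\|_2^{L_1}\|y\|_2^{L_2}$. For a control $w\in U$ the hybrid trajectory from $x_0$ is: $x_1$ on $[0,1]$ solves $\dot x_1=f(x_1,w)$, $x_1(0)=x_0$; for $i=2,\dots,T$, $x_i$ on $[i-1,i]$ solves $\dot x_i=f(x_i,w)$ with $x_i(i-1)=g(x_{i-1}(i-1),y_{i-1})$. Perturbed control: for $\epsilon\in[0,\tau]$, $u^\epsilon(t)=v$ if $t\in(\tau-\epsilon,\tau]$ and $u^\epsilon(t)=u(t)$ otherwise;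 $x_i^\epsilon$ are the modes of the trajectory under $u^\epsilon$, and $x_i=x_i^0$. Costs: $c:\mathbb{R}^{n_x}\times\mathbb{R}^m\to\mathbb{R}$ is continuous and continuously differentiable in $x$, and there are $K_6,K_7\ge0$ and a positive integer $L_3$ such that $|c(x,u)|$ and $\|\frac{\partial}{\partial x}c(x,u)\|_2$ are at most $K_6+K_7\|x\|_2^{L_3}$ for all $x$ and $u\in B(0,\rho_{\max})$. *)

theory Defs
  imports "HOL-Analysis.Analysis"
begin

definition piecewise_continuous_on :: "real \<Rightarrow> (real \<Rightarrow> 'a::real_normed_vector) \<Rightarrow> bool" where
  "piecewise_continuous_on T u \<longleftrightarrow>
     (\<exists>S. finite S \<and> S \<subseteq> {0..T} \<and> continuous_on ({0..T} - S) u \<and>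
        (\<forall>s\<in>S. (\<exists>l. (u \<longlongrightarrow> l) (at s within {0..<s})) \<and>
                 (\<exists>l. (u \<longlongrightarrow> l) (at s within {s<..T}))))"

definition admissible_controls :: "real \<Rightarrow> real \<Rightarrow> (real \<Rightarrow> real^'m) set" where
  "admissible_controls T \<rho> =
     {u. piecewise_continuous_on T u \<and> (\<forall>t\<in>{0..T}. norm (u t) \<le> \<rho>)}"

definition ode_solution ::
  "('x::euclidean_space \<Rightarrow> 'u \<Rightarrow> 'x) \<Rightarrow> (real \<Rightarrow> 'u) \<Rightarrow> real \<Rightarrow> real \<Rightarrow> 'x \<Rightarrow> (real \<Rightarrow> 'x) \<Rightarrow> bool" where
  "ode_solution f w a b x0 x \<longleftrightarrow>
     continuous_on {a..b} x \<and> x a = x0 \<and>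
     (\<forall>t\<in>{a..b}. ((\<lambda>s. f (x s) (w s)) has_integral (x t - x0)) {a..t})"

definition hybrid_trajectory ::
  "('x::euclidean_space \<Rightarrow> 'u \<Rightarrow> 'x) \<Rightarrow> ('x \<Rightarrow> 'y \<Rightarrow> 'x) \<Rightarrow> nat \<Rightarrow> (real \<Rightarrow> 'u) \<Rightarrow> 'x
     \<Rightarrow> (nat \<Rightarrow> 'y) \<Rightarrow> (nat \<Rightarrow> real \<Rightarrow> 'x) \<Rightarrow> bool" where
  "hybrid_trajectory f g T w x0 y xs \<longleftrightarrow>
     ode_solution f w 0 1 x0 (xs 1) \<and>
     (\<forall>i\<in>{2..T}. ode_solution f w (real i - 1) (real i)
                    (g (xs (i - 1) (real i - 1)) (y (i - 1))) (xs i))"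

definition needle :: "(real \<Rightarrow> 'u) \<Rightarrow> real \<Rightarrow> 'u \<Rightarrow> real \<Rightarrow> real \<Rightarrow> 'u" where
  "needle u \<tau> v \<epsilon> t = (if \<tau> - \<epsilon> < t \<and> t \<le> \<tau> then v else u t)"

end

theory Submission
  imports Defs
begin



lemma gronwall:
  fixes \<phi> :: "real \<Rightarrow> real"
  assumes cont: "continuous_on {a..b} \<phi>" and K: "K \<ge> 0"
    and le: "\<And>t. t \<in> {a..b} \<Longrightarrow> \<phi> t \<le> A + K * integral {a..t} \<phi>"
    and t: "t \<in> {a..b}"
  shows "\<phi> t \<le> A * exp (K * (t - a))"
proof -
  define \<Psi> where "\<Psi> s = integral {a..s} \<phi>" for s
  define h where "h s = exp (-(K*(s-a))) * (A + K * \<Psi> s)" for s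
  have d\<Psi>: "(\<Psi> has_real_derivative \<phi> s) (at s within {a..b})" if "s \<in> {a..b}" for s
    unfolding \<Psi>_def using integral_has_real_derivative[OF cont that] .
  have dh: "(h has_real_derivative exp(-(K*(s-a))) * (K * \<phi> s) - K * exp(-(K*(s-a))) * (A + K*\<Psi> s)) (at s within {a..b})"
    if "s\<in>{a..b}" for s
    unfolding h_def
    by (auto intro!: derivative_eq_intros d\<Psi>[OF that] simp: algebra_simps)
  have hcont: "continuous_on {a..t} h"
    using DERIV_continuous_on[OF dh] t by (meson atLeastAtMost_iff atLeastatMost_subset_iff continuous_on_subset order_refl)
  have "h t \<le> h a"
  proof (rule DERIV_nonpos_imp_decreasing_open[OF _ _ hcont])
    show "a \<le> t" using t by auto
    fix x assume x: "a < x" "x < t"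
    then have xab: "x \<in> {a..b}" and "x < b" using t by auto
    have "at x within {a..b} = at x" using x \<open>x < b\<close> by (simp add: at_within_Icc_at)
    then have "DERIV h x :> exp(-(K*(x-a))) * (K * \<phi> x) - K * exp(-(K*(x-a))) * (A + K*\<Psi> x)"
      using dh[OF xab] by simp
    moreover have "exp(-(K*(x-a))) * (K * \<phi> x) - K * exp(-(K*(x-a))) * (A + K*\<Psi> x)
        = exp(-(K*(x-a))) * K * (\<phi> x - (A + K*\<Psi> x))" by (simp add: algebra_simps)
    moreover have "\<phi> x - (A + K*\<Psi> x) \<le> 0" using le[OF xab] by (simp add: \<Psi>_def)
    ultimately show "\<exists>y. DERIV h x :> y \<and> y \<le> 0"
      using K by (metis mult_nonneg_nonpos exp_ge_zero zero_le_mult_iff)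
  qed
  moreover have "h a = A" by (simp add: h_def \<Psi>_def)
  ultimately have "h t \<le> A" by simp
  then have "exp (-(K*(t-a))) * (A + K * \<Psi> t) \<le> A" by (simp add: h_def)
  then have m1: "exp (K*(t-a)) * (exp (-(K*(t-a))) * (A + K * \<Psi> t)) \<le> exp (K*(t-a)) * A"
    by (intro mult_left_mono) auto
  have m2: "exp (K*(t-a)) * (exp (-(K*(t-a))) * (A + K*\<Psi> t)) = A + K*\<Psi> t"
    by (subst mult.assoc[symmetric]) (simp add: exp_minus_inverse)
  have "A + K * \<Psi> t \<le> A * exp (K*(t-a))"
    using m1 unfolding m2 by (simp add: mult.commute)
  then show ?thesis using le[OF t] by (simp add: \<Psi>_def)
qed

lemma ode_diff:
  fixes f :: "'x::euclidean_space \<Rightarrow> 'u::real_normed_vector \<Rightarrow> 'x"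
  assumes lip: "\<And>x' x'' u' u''. norm u' \<le> \<rho> \<Longrightarrow> norm u'' \<le> \<rho> \<Longrightarrow>
                 norm (f x' u' - f x'' u'') \<le> K1 * (norm (x' - x'') + norm (u' - u''))"
   and K1: "K1 \<ge> 0"
   and s1: "ode_solution f w1 a b p1 x1" and s2: "ode_solution f w2 a b p2 x2"
   and ab: "b \<le> a + 1"
   and w1: "\<And>s. s\<in>{a..b} \<Longrightarrow> norm (w1 s) \<le> \<rho>"
   and w2: "\<And>s. s\<in>{a..b} \<Longrightarrow> norm (w2 s) \<le> \<rho>"
   and hb: "\<And>s. s \<in> {a..b} \<Longrightarrow> norm (w1 s - w2 s) \<le> h s"
   and hint: "h integrable_on {a..b}" and h0: "\<And>s. s\<in>{a..b} \<Longrightarrow> 0 \<le> h s"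
   and H: "integral {a..b} h \<le> H"
   and t: "t \<in> {a..b}"
  shows "norm (x1 t - x2 t) \<le> (norm (p1 - p2) + K1 * H) * exp K1"
proof -
  have c1: "continuous_on {a..b} x1" and x1a: "x1 a = p1"
    and i1: "\<And>s. s\<in>{a..b} \<Longrightarrow> ((\<lambda>r. f (x1 r) (w1 r)) has_integral (x1 s - p1)) {a..s}"
    using s1 unfolding ode_solution_def by auto
  have c2: "continuous_on {a..b} x2" and x2a: "x2 a = p2"
    and i2: "\<And>s. s\<in>{a..b} \<Longrightarrow> ((\<lambda>r. f (x2 r) (w2 r)) has_integral (x2 s - p2)) {a..s}"
    using s2 unfolding ode_solution_def by auto
  define \<phi> where "\<phi> s = norm (x1 s - x2 s)" for s
  have \<phi>c: "continuous_on {a..b} \<phi>"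
    unfolding \<phi>_def by (intro continuous_on_norm continuous_on_diff c1 c2)
  have H0: "0 \<le> H" using H h0 by (meson Henstock_Kurzweil_Integration.integral_nonneg hint order_trans)
  have key: "\<phi> s \<le> (norm (p1 - p2) + K1 * H) + K1 * integral {a..s} \<phi>" if s: "s\<in>{a..b}" for s
  proof -
    have sub: "{a..s} \<subseteq> {a..b}" using s by auto
    have id: "((\<lambda>r. f (x1 r) (w1 r) - f (x2 r) (w2 r)) has_integral (x1 s - p1 - (x2 s - p2))) {a..s}"
      by (rule has_integral_diff[OF i1[OF s] i2[OF s]])
    have \<phi>i: "\<phi> integrable_on {a..s}"
      using \<phi>c sub by (meson continuous_on_subset integrable_continuous_interval)
    have hi: "h integrable_on {a..s}"
      using hint sub by (meson integrable_on_subinterval)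
    have bnd: "norm (integral {a..s} (\<lambda>r. f (x1 r) (w1 r) - f (x2 r) (w2 r)))
        \<le> integral {a..s} (\<lambda>r. K1 * \<phi> r + K1 * h r)"
    proof (rule integral_norm_bound_integral)
      show "(\<lambda>r. f (x1 r) (w1 r) - f (x2 r) (w2 r)) integrable_on {a..s}" using id by blast
      show "(\<lambda>r. K1 * \<phi> r + K1 * h r) integrable_on {a..s}"
        using \<phi>i hi by (intro integrable_add integrable_on_mult_right) 
      fix r assume r: "r \<in> {a..s}"
      then have rb: "r \<in> {a..b}" using sub by auto
      have "norm (f (x1 r) (w1 r) - f (x2 r) (w2 r)) \<le> K1 * (norm (x1 r - x2 r) + norm (w1 r - w2 r))"
        using lip w1[OF rb] w2[OF rb] by blast
      also have "\<dots> \<le> K1 * (\<phi> r + h r)"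
        using hb[OF rb] K1 by (simp add: \<phi>_def mult_left_mono)
      finally show "norm (f (x1 r) (w1 r) - f (x2 r) (w2 r)) \<le> K1 * \<phi> r + K1 * h r"
        by (simp add: algebra_simps)
    qed
    have "integral {a..s} (\<lambda>r. K1 * \<phi> r + K1 * h r) = K1 * integral {a..s} \<phi> + K1 * integral {a..s} h"
      using \<phi>i hi by (simp add: integral_add integrable_on_mult_right)
    moreover have "integral {a..s} h \<le> integral {a..b} h"
      using hi hint h0 sub by (intro integral_subset_le) auto
    ultimately have bnd2: "norm (x1 s - p1 - (x2 s - p2)) \<le> K1 * integral {a..s} \<phi> + K1 * H"
      using bnd integral_unique[OF id] H K1
      by (smt (verit, ccfv_SIG) mult_left_mono)
    have "\<phi> s = norm ((p1 - p2) + (x1 s - p1 - (x2 s - p2)))" by (simp add: \<phi>_def)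
    also have "\<dots> \<le> norm (p1 - p2) + norm (x1 s - p1 - (x2 s - p2))" by (rule norm_triangle_ineq)
    finally show ?thesis using bnd2 by simp
  qed
  have "\<phi> t \<le> (norm (p1 - p2) + K1 * H) * exp (K1 * (t - a))"
    by (rule gronwall[OF \<phi>c K1 key t])
  also have "\<dots> \<le> (norm (p1 - p2) + K1 * H) * exp K1"
    using t ab K1 H0 by (intro mult_left_mono) (auto simp: mult_left_le)
  finally show ?thesis by (simp add: \<phi>_def)
qed

lemma ode_bound:
  fixes f :: "'x::euclidean_space \<Rightarrow> 'u::real_normed_vector \<Rightarrow> 'x"
  assumes lip: "\<And>x' x'' u' u''. norm u' \<le> \<rho> \<Longrightarrow> norm u'' \<le> \<rho> \<Longrightarrow>
                 norm (f x' u' - f x'' u'') \<le> K1 * (norm (x' - x'') + norm (u' - u''))"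
   and K1: "K1 \<ge> 0" and rho: "\<rho> \<ge> 0"
   and s1: "ode_solution f w a b p x"
   and ab: "b \<le> a + 1"
   and w: "\<And>s. s\<in>{a..b} \<Longrightarrow> norm (w s) \<le> \<rho>"
   and t: "t \<in> {a..b}"
  shows "norm (x t) \<le> (norm p + norm (f 0 0) + K1 * \<rho>) * exp K1"
proof -
  have c1: "continuous_on {a..b} x" and x1a: "x a = p"
    and i1: "\<And>s. s\<in>{a..b} \<Longrightarrow> ((\<lambda>r. f (x r) (w r)) has_integral (x s - p)) {a..s}"
    using s1 unfolding ode_solution_def by auto
  define C0 where "C0 = norm (f 0 0) + K1 * \<rho>"
  have C0: "C0 \<ge> 0" using K1 rho by (simp add: C0_def)
  have fb: "norm (f z u) \<le> K1 * norm z + C0" if "norm u \<le> \<rho>" for z u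
  proof -
    have "norm (f z u - f 0 0) \<le> K1 * (norm (z - 0) + norm (u - 0))"
      using lip[of u 0 z 0] that rho by simp
    then have "norm (f z u) \<le> norm (f 0 0) + K1 * (norm z + norm u)"
      by (smt (verit) norm_triangle_ineq2 diff_zero)
    also have "\<dots> \<le> norm (f 0 0) + K1 * (norm z + \<rho>)"
      using that K1 by (simp add: mult_left_mono)
    finally show ?thesis by (simp add: C0_def algebra_simps)
  qed
  define \<phi> where "\<phi> s = norm (x s)" for s
  have \<phi>c: "continuous_on {a..b} \<phi>"
    unfolding \<phi>_def by (intro continuous_on_norm c1)
  have key: "\<phi> s \<le> (norm p + C0) + K1 * integral {a..s} \<phi>" if s: "s\<in>{a..b}" for s
  proof -
    have sub: "{a..s} \<subseteq> {a..b}" using s by auto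
    have \<phi>i: "\<phi> integrable_on {a..s}"
      using \<phi>c sub by (meson continuous_on_subset integrable_continuous_interval)
    have bnd: "norm (integral {a..s} (\<lambda>r. f (x r) (w r)))
        \<le> integral {a..s} (\<lambda>r. K1 * \<phi> r + C0)"
    proof (rule integral_norm_bound_integral)
      show "(\<lambda>r. f (x r) (w r)) integrable_on {a..s}" using i1[OF s] by blast
      show "(\<lambda>r. K1 * \<phi> r + C0) integrable_on {a..s}"
        using \<phi>i by (intro integrable_add integrable_on_mult_right integrable_const_ivl)
      fix r assume r: "r \<in> {a..s}"
      then have rb: "r \<in> {a..b}" using sub by auto
      show "norm (f (x r) (w r)) \<le> K1 * \<phi> r + C0"
        using fb[OF w[OF rb]] by (simp add: \<phi>_def)
    qed
    have "integral {a..s} (\<lambda>r. K1 * \<phi> r + C0) = K1 * integral {a..s} \<phi> + C0 * (s - a)"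
      using \<phi>i s by (simp add: integral_add integrable_on_mult_right integrable_const_ivl mult.commute)
    moreover have "C0 * (s - a) \<le> C0" using s ab C0 by (simp add: mult_left_le)
    moreover have "norm (x s - p) \<le> integral {a..s} (\<lambda>r. K1 * \<phi> r + C0)"
      using bnd integral_unique[OF i1[OF s]] by simp
    ultimately have bnd2: "norm (x s - p) \<le> K1 * integral {a..s} \<phi> + C0"
      by linarith
    have "\<phi> s = norm (p + (x s - p))" by (simp add: \<phi>_def)
    also have "\<dots> \<le> norm p + norm (x s - p)" by (rule norm_triangle_ineq)
    finally show ?thesis using bnd2 by simp
  qed
  have "\<phi> t \<le> (norm p + C0) * exp (K1 * (t - a))"
    by (rule gronwall[OF \<phi>c K1 key t])
  also have "\<dots> \<le> (norm p + C0) * exp K1"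
    using t ab K1 C0 by (intro mult_left_mono) (auto simp: mult_left_le)
  finally show ?thesis by (simp add: \<phi>_def C0_def add.assoc)
qed



lemma mvt_bound:
  fixes F :: "'a::real_normed_vector \<Rightarrow> 'b::real_normed_vector"
  assumes d: "\<And>z. (F has_derivative blinfun_apply (DF z)) (at z)"
    and b: "\<And>z. norm z \<le> R \<Longrightarrow> norm (DF z) \<le> B"
    and x: "norm x \<le> R" and x': "norm x' \<le> R"
  shows "norm (F x - F x') \<le> B * norm (x - x')"
proof (rule differentiable_bound[of "cball 0 R" F "\<lambda>z. blinfun_apply (DF z)" B x x'])
  show "convex (cball (0::'a) R)" by simp
  show "(F has_derivative blinfun_apply (DF z)) (at z within cball 0 R)" for z
    using d has_derivative_at_withinI by blast
  show "onorm (blinfun_apply (DF z)) \<le> B" if "z \<in> cball 0 R" for z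
    using b[of z] that by (simp add: norm_blinfun.rep_eq)
qed (use x x' in auto)

lemma poly_step:
  fixes K2 K3 K4 K5 R C P a :: real
  assumes K: "0 \<le> K2" "0 \<le> K3" "0 \<le> K4" "0 \<le> K5"
    and R: "0 \<le> R" "R \<le> C * P ^ E" and P: "1 \<le> P" and a: "0 \<le> a" and C: "0 \<le> C"
  shows "K2 + K3 * R ^ L1 + K4 * a ^ L2 + K5 * R ^ L1 * a ^ L2
     \<le> (K2 + K3 + K4 + K5) * (1 + C) ^ L1 * (P * (1 + a)) ^ (E * L1 + L2)"
proof -
  define Q where "Q = P * (1 + a)"
  define M where "M = (1 + C) ^ L1"
  have Q1: "1 \<le> Q" using mult_mono[of 1 P 1 "1+a"] P a by (simp add: Q_def)
  have PQ: "P \<le> Q" using P a by (simp add: Q_def mult_le_cancel_left1)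
  have "1 + a \<le> P * (1 + a)" using mult_right_mono[of 1 P "1+a"] P a by simp
  then have aQ: "a \<le> Q" by (simp add: Q_def)
  have M1: "1 \<le> M" using C by (simp add: M_def)
  have "R ^ L1 \<le> (C * P ^ E) ^ L1" using R by (simp add: power_mono)
  also have "\<dots> \<le> ((1 + C) * Q ^ E) ^ L1"
    using C P PQ by (intro power_mono mult_mono power_mono) auto
  finally have X: "R ^ L1 \<le> M * Q ^ (E * L1)" by (simp add: M_def power_mult_distrib power_mult)
  have Y: "a ^ L2 \<le> Q ^ L2" using a aQ by (simp add: power_mono)
  have QF1: "Q ^ (E * L1) \<le> Q ^ (E * L1 + L2)" and QF2: "Q ^ L2 \<le> Q ^ (E * L1 + L2)"
    and QF0: "1 \<le> Q ^ (E * L1 + L2)"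
    using Q1 by (auto intro: power_increasing)
  have MQ: "1 \<le> M * Q ^ (E * L1 + L2)" using mult_mono[of 1 M 1 "Q ^ (E * L1 + L2)"] M1 QF0 by simp
  have t2: "K2 \<le> K2 * (M * Q ^ (E * L1 + L2))" using K MQ by (simp add: mult_le_cancel_left1)
  have t3: "K3 * R ^ L1 \<le> K3 * (M * Q ^ (E * L1 + L2))"
    using K X QF1 M1 by (intro mult_left_mono) (auto intro: order_trans mult_left_mono)
  have t4: "K4 * a ^ L2 \<le> K4 * (M * Q ^ (E * L1 + L2))"
  proof -
    have "Q ^ (E * L1 + L2) \<le> M * Q ^ (E * L1 + L2)"
      using mult_right_mono[of 1 M "Q ^ (E * L1 + L2)"] M1 Q1 by simp
    then have "Q ^ L2 \<le> M * Q ^ (E * L1 + L2)" using QF2 by linarith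
    then show ?thesis using K Y by (intro mult_left_mono) auto
  qed
  have t5: "K5 * R ^ L1 * a ^ L2 \<le> K5 * (M * Q ^ (E * L1 + L2))"
  proof -
    have "R ^ L1 * a ^ L2 \<le> (M * Q ^ (E * L1)) * Q ^ L2"
      using X Y R a M1 Q1 by (intro mult_mono) auto
    also have "\<dots> = M * Q ^ (E * L1 + L2)" by (simp add: power_add)
    finally show ?thesis using K by (simp add: mult.assoc mult_left_mono)
  qed
  have "K2 + K3 * R ^ L1 + K4 * a ^ L2 + K5 * R ^ L1 * a ^ L2 \<le> (K2 + K3 + K4 + K5) * (M * Q ^ (E * L1 + L2))"
  proof -
    have "(K2 + K3 + K4 + K5) * (M * Q ^ (E * L1 + L2)) = K2 * (M * Q ^ (E * L1 + L2)) + K3 * (M * Q ^ (E * L1 + L2))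
       + K4 * (M * Q ^ (E * L1 + L2)) + K5 * (M * Q ^ (E * L1 + L2))" by (simp add: distrib_right)
    then show ?thesis using t2 t3 t4 t5 by linarith
  qed
  then show ?thesis by (simp add: M_def Q_def mult.assoc)
qed

definition Lists :: "nat \<Rightarrow> nat \<Rightarrow> nat list set" where
  "Lists n D = {js. set js \<subseteq> {..D} \<and> length js = n}"

lemma finite_Lists: "finite (Lists n D)"
  unfolding Lists_def by (rule finite_lists_length_eq) simp

lemma Lists_Suc: "Lists (Suc n) D = (\<lambda>(k, js). k # js) ` ({..D} \<times> Lists n D)"
  unfolding Lists_def by (auto simp: length_Suc_conv image_iff)

lemma prod_sum_lists:
  fixes a :: "nat \<Rightarrow> real"
  shows "(\<Prod>m<n. \<Sum>k\<le>D. a m ^ k) = (\<Sum>js\<in>Lists n D. \<Prod>m<n. a m ^ (js ! m))"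
proof (induction n arbitrary: a)
  case 0
  have "Lists 0 D = {[]}" by (auto simp: Lists_def)
  then show ?case by simp
next
  case (Suc n)
  have inj: "inj_on (\<lambda>(k, js). k # js) ({..D} \<times> Lists n D)"
    by (auto simp: inj_on_def)
  have "(\<Sum>js\<in>Lists (Suc n) D. \<Prod>m<Suc n. a m ^ (js ! m))
      = (\<Sum>p\<in>{..D} \<times> Lists n D. \<Prod>m<Suc n. a m ^ ((fst p # snd p) ! m))"
    unfolding Lists_Suc by (subst sum.reindex[OF inj]) (simp add: case_prod_beta)
  also have "\<dots> = (\<Sum>p\<in>{..D} \<times> Lists n D. a 0 ^ fst p * (\<Prod>m<n. a (Suc m) ^ (snd p ! m)))"
    by (simp del: prod.lessThan_Suc add: prod.lessThan_Suc_shift)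
  also have "\<dots> = (\<Sum>k\<le>D. \<Sum>js\<in>Lists n D. a 0 ^ k * (\<Prod>m<n. a (Suc m) ^ (js ! m)))"
    by (subst sum.cartesian_product) (simp add: case_prod_beta)
  also have "\<dots> = (\<Sum>k\<le>D. a 0 ^ k) * (\<Sum>js\<in>Lists n D. \<Prod>m<n. a (Suc m) ^ (js ! m))"
    by (simp add: sum_product)
  also have "\<dots> = (\<Sum>k\<le>D. a 0 ^ k) * (\<Prod>m<n. \<Sum>k\<le>D. a (Suc m) ^ k)"
    using Suc.IH[of "\<lambda>m. a (Suc m)"] by simp
  also have "\<dots> = (\<Prod>m<Suc n. \<Sum>k\<le>D. a m ^ k)"
    by (simp del: prod.lessThan_Suc add: prod.lessThan_Suc_shift)
  finally show ?case by simp
qed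

lemma one_plus_pow_le:
  fixes a :: real assumes a: "0 \<le> a"
  shows "(1 + a) ^ E \<le> 2 ^ E * (\<Sum>k\<le>E. a ^ k)"
proof -
  have "(1 + a) ^ E \<le> (2 * max 1 a) ^ E" using a by (intro power_mono) auto
  also have "\<dots> = 2 ^ E * max 1 a ^ E" by (simp add: power_mult_distrib)
  also have "max 1 a ^ E \<le> (\<Sum>k\<le>E. a ^ k)"
  proof (cases "a \<le> 1")
    case True
    then have "max 1 a ^ E = a ^ 0" by simp
    also have "\<dots> \<le> (\<Sum>k\<le>E. a ^ k)" using a by (intro member_le_sum) auto
    finally show ?thesis .
  next
    case False
    then have "max 1 a ^ E = a ^ E" by simp
    also have "\<dots> \<le> (\<Sum>k\<le>E. a ^ k)" using a by (intro member_le_sum) auto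
    finally show ?thesis .
  qed
  then have "2 ^ E * max 1 a ^ E \<le> 2 ^ E * (\<Sum>k\<le>E. a ^ k)" by simp
  finally show ?thesis .
qed

lemma Pi_bound:
  fixes a :: "nat \<Rightarrow> real" assumes a: "\<And>m. 0 \<le> a m"
  shows "(\<Prod>m<n. 1 + a m) ^ E \<le> 2 ^ (E * n) * (\<Sum>js\<in>Lists n E. \<Prod>m<n. a m ^ (js ! m))"
proof -
  have "(\<Prod>m<n. 1 + a m) ^ E = (\<Prod>m<n. (1 + a m) ^ E)" by (simp add: prod_power_distrib)
  also have "\<dots> \<le> (\<Prod>m<n. 2 ^ E * (\<Sum>k\<le>E. a m ^ k))"
    using a by (intro prod_mono) (auto intro: one_plus_pow_le)
  also have "\<dots> = 2 ^ (E * n) * (\<Prod>m<n. \<Sum>k\<le>E. a m ^ k)"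
    by (simp add: prod.distrib power_mult)
  finally show ?thesis by (simp add: prod_sum_lists)
qed

theorem proposition12:
  fixes T L1 L2 L3 :: nat
    and \<rho>max K1 K2 K3 K4 K5 K6 K7 :: real
    and f :: "real^'nx \<Rightarrow> real^'m \<Rightarrow> real^'nx"
    and g :: "real^'nx \<Rightarrow> real^'ny \<Rightarrow> real^'nx"
    and c :: "real^'nx \<Rightarrow> real^'m \<Rightarrow> real"
    and x0 :: "real^'nx" and \<tau> :: real and v :: "real^'m"
  assumes T_pos: "T \<ge> 1"
    and rho_pos: "\<rho>max > 0"
    and f_C1: "\<exists>Df :: (real^'nx) \<times> (real^'m) \<Rightarrow> ((real^'nx) \<times> (real^'m)) \<Rightarrow>\<^sub>L (real^'nx).
                 (\<forall>p. ((\<lambda>p. f (fst p) (snd p)) has_derivative blinfun_apply (Df p)) (at p))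
                 \<and> continuous_on UNIV Df"
    and K1: "K1 \<ge> 1"
    and f_lip: "\<And>x' x'' u' u''. norm u' \<le> \<rho>max \<Longrightarrow> norm u'' \<le> \<rho>max \<Longrightarrow>
                 norm (f x' u' - f x'' u'') \<le> K1 * (norm (x' - x'') + norm (u' - u''))"
    and g_cont: "continuous_on UNIV (\<lambda>p. g (fst p) (snd p))"
    and Dg: "\<And>x y. ((\<lambda>x. g x y) has_derivative blinfun_apply (Dg x y)) (at x)"
    and K2_5: "K2 \<ge> 0" "K3 \<ge> 0" "K4 \<ge> 0" "K5 \<ge> 0"
    and L12: "L1 \<ge> 1" "L2 \<ge> 1"
    and g_bound: "\<And>x y. norm (g x y) \<le> K2 + K3 * norm x ^ L1 + K4 * norm y ^ L2
                          + K5 * norm x ^ L1 * norm y ^ L2"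
    and Dg_bound: "\<And>x y. norm (Dg x y) \<le> K2 + K3 * norm x ^ L1 + K4 * norm y ^ L2
                          + K5 * norm x ^ L1 * norm y ^ L2"
    and c_cont: "continuous_on UNIV (\<lambda>p. c (fst p) (snd p))"
    and Dc: "\<And>x u. ((\<lambda>x. c x u) has_derivative blinfun_apply (Dc x u)) (at x)"
    and Dc_cont: "\<And>u. continuous_on UNIV (\<lambda>x. Dc x u)"
    and K67: "K6 \<ge> 0" "K7 \<ge> 0"
    and L3: "L3 \<ge> 1"
    and c_bound: "\<And>x u. norm u \<le> \<rho>max \<Longrightarrow> \<bar>c x u\<bar> \<le> K6 + K7 * norm x ^ L3"
    and Dc_bound: "\<And>x u. norm u \<le> \<rho>max \<Longrightarrow> norm (Dc x u) \<le> K6 + K7 * norm x ^ L3"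
    and tau: "0 < \<tau>" "\<tau> < 1"
    and v: "norm v \<le> \<rho>max"
  shows "\<exists>\<beta>1 :: real. \<exists>\<L> :: nat \<Rightarrow> nat list set. \<exists>\<beta> :: nat \<Rightarrow> nat list \<Rightarrow> real.
    0 < \<beta>1 \<and>
    (\<forall>i\<in>{2..T}. finite (\<L> i) \<and> (\<forall>js\<in>\<L> i. length js = i - 1 \<and> 0 < \<beta> i js)) \<and>
    (\<forall>u \<in> admissible_controls (real T) \<rho>max. continuous (at_left \<tau>) u \<longrightarrow>
      (\<forall>(y :: nat \<Rightarrow> real^'ny) (\<epsilon>::real) xs xe.
         0 \<le> \<epsilon> \<longrightarrow> \<epsilon> \<le> \<tau> \<longrightarrow>
         hybrid_trajectory f g T u x0 y xs \<longrightarrow>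
         hybrid_trajectory f g T (needle u \<tau> v \<epsilon>) x0 y xe \<longrightarrow>
         (\<forall>t\<in>{\<tau><..1}. \<bar>c (xe 1 t) (needle u \<tau> v \<epsilon> t) - c (xs 1 t) (u t)\<bar> \<le> \<epsilon> * \<beta>1) \<and>
         (\<forall>i\<in>{2..T}. \<forall>t\<in>{real i - 1..real i}.
            \<bar>c (xe i t) (needle u \<tau> v \<epsilon> t) - c (xs i t) (u t)\<bar>
              \<le> \<epsilon> * (\<Sum>js\<in>\<L> i. \<beta> i js * (\<Prod>m<i - 1. norm (y (m + 1)) ^ (js ! m))))))"
  
proof -
  have rho0: "0 \<le> \<rho>max" using rho_pos by simp
  have K10: "0 \<le> K1" using K1 by simp
  define C0 where "C0 = norm (f 0 0) + K1 * \<rho>max"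
  have C00: "0 \<le> C0" using rho0 K10 by (simp add: C0_def)
  define Pi where "Pi i y = (\<Prod>m<i-1. 1 + norm (y (m+1) :: real^'ny))" for i :: nat and y :: "nat \<Rightarrow> real^'ny"
  define Adm where "Adm u \<epsilon> y xs xe \<longleftrightarrow> u \<in> admissible_controls (real T) \<rho>max \<and> 0 \<le> \<epsilon> \<and> \<epsilon> \<le> \<tau>
      \<and> hybrid_trajectory f g T u x0 y xs \<and> hybrid_trajectory f g T (needle u \<tau> v \<epsilon>) x0 y xe"
    for u \<epsilon> y and xs xe :: "nat \<Rightarrow> real \<Rightarrow> real^'nx"
  have Pi1: "1 \<le> Pi i y" for i y
    unfolding Pi_def by (intro prod_ge_1) auto
  have PiSuc: "Pi (Suc i) y = Pi i y * (1 + norm (y i))" if i1: "1 \<le> i" for i y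
  proof -
    obtain j where j: "i = Suc j" using i1 by (cases i) auto
    then show ?thesis unfolding Pi_def by simp
  qed
  have uB: "norm (u s) \<le> \<rho>max" if "Adm u \<epsilon> y xs xe" "s \<in> {0..real T}" for u \<epsilon> y xs xe s
    using that by (simp add: Adm_def admissible_controls_def)
  have ueB: "norm (needle u \<tau> v \<epsilon> s) \<le> \<rho>max" if "Adm u \<epsilon> y xs xe" "s \<in> {0..real T}" for u \<epsilon> y xs xe s
    using uB[OF that] v by (simp add: needle_def)
  have ueq: "needle u \<tau> v \<epsilon> s = u s" if "\<tau> < s" for u \<epsilon> s
    using that by (simp add: needle_def)
  have main: "\<exists>C E. 0 < C \<and> (\<forall>u \<epsilon> y xs xe. Adm u \<epsilon> y xs xe \<longrightarrow> (\<forall>t\<in>{real i - 1..real i}.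
      norm (xs i t) \<le> C * Pi i y ^ E \<and> norm (xe i t) \<le> C * Pi i y ^ E
      \<and> norm (xe i t - xs i t) \<le> \<epsilon> * (C * Pi i y ^ E)))" if "1 \<le> i" "i \<le> T" for i
    using that
  proof (induction i)
    case 0
    then show ?case by simp
  next
    case (Suc i)
    show ?case
    proof (cases "i = 0")
      case True
      define Cb where "Cb = (norm x0 + C0) * exp K1"
      define Cd where "Cd = 2 * K1 * \<rho>max * exp K1"
      have Cb0: "0 \<le> Cb" using C00 by (simp add: Cb_def)
      have Cd0: "0 \<le> Cd" using K10 rho0 by (simp add: Cd_def)
      show ?thesis
      proof (intro exI[of _ "Cb + Cd + 1"] exI[of _ 0] conjI allI impI ballI)
        show "0 < Cb + Cd + 1" using Cb0 Cd0 by simp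
        fix u \<epsilon> y xs xe t assume A: "Adm u \<epsilon> y xs xe" and t: "t \<in> {real (Suc i) - 1..real (Suc i)}"
        have t01: "t \<in> {0..1}" using t True by simp
        have s1: "ode_solution f u 0 1 x0 (xs 1)" and s2: "ode_solution f (needle u \<tau> v \<epsilon>) 0 1 x0 (xe 1)"
          using A by (auto simp: Adm_def hybrid_trajectory_def)
        have w1: "norm (u s) \<le> \<rho>max" if "s \<in> {0..1}" for s
          using uB[OF A] that T_pos by auto
        have w2: "norm (needle u \<tau> v \<epsilon> s) \<le> \<rho>max" if "s \<in> {0..1}" for s
          using ueB[OF A] that T_pos by auto
        have bx: "norm (xs 1 t) \<le> Cb"
          using ode_bound[OF f_lip K10 rho0 s1 _ w1 t01] by (simp add: Cb_def C0_def add.assoc)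
        have be: "norm (xe 1 t) \<le> Cb"
          using ode_bound[OF f_lip K10 rho0 s2 _ w2 t01] by (simp add: Cb_def C0_def add.assoc)
        have e: "0 \<le> \<epsilon>" "\<epsilon> \<le> \<tau>" using A by (auto simp: Adm_def)
        define h where "h s = (if s \<in> {\<tau>-\<epsilon>..\<tau>} then 2 * \<rho>max else 0)" for s :: real
        have int: "{\<tau>-\<epsilon>..\<tau>} \<inter> {0..1} = {\<tau>-\<epsilon>..\<tau>}" using e tau by auto
        have hint: "h integrable_on {0..1}"
          unfolding h_def integrable_restrict_Int int by (simp add: integrable_const_ivl)
        have hval: "integral {0..1} h = 2 * \<rho>max * \<epsilon>"
          unfolding h_def integral_restrict_Int int using e by simp
        have hb: "norm (needle u \<tau> v \<epsilon> s - u s) \<le> h s" if "s \<in> {0..1}" for s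
        proof (cases "\<tau> - \<epsilon> < s \<and> s \<le> \<tau>")
          case True
          then have "norm (needle u \<tau> v \<epsilon> s - u s) = norm (v - u s)" by (simp add: needle_def)
          also have "\<dots> \<le> norm v + norm (u s)" by (rule norm_triangle_ineq4)
          also have "\<dots> \<le> 2 * \<rho>max" using v w1[OF that] by simp
          finally show ?thesis using True by (simp add: h_def)
        next
          case False
          then show ?thesis using rho0 by (simp add: needle_def h_def)
        qed
        have h0: "0 \<le> h s" for s using rho0 by (simp add: h_def)
        have bd: "norm (xe 1 t - xs 1 t) \<le> (norm (x0 - x0) + K1 * (2 * \<rho>max * \<epsilon>)) * exp K1"
          using ode_diff[OF f_lip K10 s2 s1 _ w2 w1 hb hint h0 _ t01] hval by simp
        then have bd': "norm (xe 1 t - xs 1 t) \<le> \<epsilon> * Cd" by (simp add: Cd_def mult_ac)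
        have "\<epsilon> * Cd \<le> \<epsilon> * (Cb + Cd + 1)" using e Cb0 by (intro mult_left_mono) auto
        then show "norm (xe (Suc i) t - xs (Suc i) t) \<le> \<epsilon> * ((Cb + Cd + 1) * Pi (Suc i) y ^ 0)"
          using bd' True by simp
        show "norm (xs (Suc i) t) \<le> (Cb + Cd + 1) * Pi (Suc i) y ^ 0" using bx True Cd0 by simp
        show "norm (xe (Suc i) t) \<le> (Cb + Cd + 1) * Pi (Suc i) y ^ 0" using be True Cd0 by simp
      qed
    next
      case False
      then have i1: "1 \<le> i" and iT: "i \<le> T" using Suc.prems by auto
      obtain C E where C: "0 < C" and H: "\<And>u \<epsilon> y xs xe t. Adm u \<epsilon> y xs xe \<Longrightarrow> t\<in>{real i - 1..real i} \<Longrightarrow>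
          norm (xs i t) \<le> C * Pi i y ^ E \<and> norm (xe i t) \<le> C * Pi i y ^ E
          \<and> norm (xe i t - xs i t) \<le> \<epsilon> * (C * Pi i y ^ E)"
        using Suc.IH[OF i1 iT] by blast
      define KK where "KK = (K2 + K3 + K4 + K5) * (1 + C) ^ L1"
      define F where "F = E * L1 + L2"
      define C' where "C' = (KK + C0) * exp K1 + KK * C * exp K1 + 1"
      have KK0: "0 \<le> KK" using K2_5 C by (simp add: KK_def)
      show ?thesis
      proof (intro exI[of _ C'] exI[of _ "F + E"] conjI allI impI ballI)
        have "0 \<le> (KK + C0) * exp K1" "0 \<le> KK * C * exp K1" using KK0 C00 C by simp_all
        then show "0 < C'" by (simp add: C'_def)
        fix u \<epsilon> y xs xe t assume A: "Adm u \<epsilon> y xs xe" and t: "t \<in> {real (Suc i) - 1..real (Suc i)}"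
        have t': "t \<in> {real i..real i + 1}" using t by simp
        define P where "P = Pi i y"
        define Q where "Q = Pi (Suc i) y"
        have P1: "1 \<le> P" and Q1: "1 \<le> Q" using Pi1 by (auto simp: P_def Q_def)
        have QP: "Q = P * (1 + norm (y i))" using PiSuc[OF i1] by (simp add: P_def Q_def)
        have PQ: "P \<le> Q" using P1 QP mult_left_mono[of 1 "1 + norm (y i)" P] by simp
        have ti: "real i \<in> {real i - 1..real i}" by simp
        have bs: "norm (xs i (real i)) \<le> C * P ^ E" and be: "norm (xe i (real i)) \<le> C * P ^ E"
          and bd: "norm (xe i (real i) - xs i (real i)) \<le> \<epsilon> * (C * P ^ E)"
          using H[OF A ti] by (auto simp: P_def)
        have e: "0 \<le> \<epsilon>" "\<epsilon> \<le> \<tau>" using A by (auto simp: Adm_def)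
        have Si: "Suc i \<in> {2..T}" using i1 Suc.prems by auto
        have eq1: "real (Suc i) - 1 = real i" by simp
        have eq2: "real (Suc i) = real i + 1" by simp
        have raw: "ode_solution f (u) (real (Suc i) - 1) (real (Suc i)) (g (xs (Suc i - 1) (real (Suc i) - 1)) (y (Suc i - 1))) (xs (Suc i))"
          using A Si unfolding Adm_def hybrid_trajectory_def by blast
        have s1: "ode_solution f (u) (real i) (real i + 1) (g (xs i (real i)) (y i)) (xs (Suc i))"
          using raw unfolding eq1 diff_Suc_1 unfolding eq2 .
        have raw: "ode_solution f (needle u \<tau> v \<epsilon>) (real (Suc i) - 1) (real (Suc i)) (g (xe (Suc i - 1) (real (Suc i) - 1)) (y (Suc i - 1))) (xe (Suc i))"
          using A Si unfolding Adm_def hybrid_trajectory_def by blast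
        have s2: "ode_solution f (needle u \<tau> v \<epsilon>) (real i) (real i + 1) (g (xe i (real i)) (y i)) (xe (Suc i))"
          using raw unfolding eq1 diff_Suc_1 unfolding eq2 .
        have w1: "norm (u s) \<le> \<rho>max" if "s \<in> {real i..real i + 1}" for s
          using uB[OF A] that Suc.prems by auto
        have w2: "norm (needle u \<tau> v \<epsilon> s) \<le> \<rho>max" if "s \<in> {real i..real i + 1}" for s
          using ueB[OF A] that Suc.prems by auto
        have CP0: "0 \<le> C * P ^ E" using C P1 by simp
        have gb: "norm (g z (y i)) \<le> KK * Q ^ F" if "norm z \<le> C * P ^ E" for z
        proof -
          have "norm (g z (y i)) \<le> K2 + K3 * norm z ^ L1 + K4 * norm (y i) ^ L2 + K5 * norm z ^ L1 * norm (y i) ^ L2"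
            by (rule g_bound)
          also have "\<dots> \<le> KK * Q ^ F"
            unfolding KK_def F_def QP
            by (rule poly_step[OF K2_5 _ that P1]) (use C in auto)
          finally show ?thesis .
        qed
        have Dgb: "norm (Dg z (y i)) \<le> KK * Q ^ F" if "norm z \<le> C * P ^ E" for z
        proof -
          have "norm (Dg z (y i)) \<le> K2 + K3 * norm z ^ L1 + K4 * norm (y i) ^ L2 + K5 * norm z ^ L1 * norm (y i) ^ L2"
            by (rule Dg_bound)
          also have "\<dots> \<le> KK * Q ^ F"
            unfolding KK_def F_def QP
            by (rule poly_step[OF K2_5 _ that P1]) (use C in auto)
          finally show ?thesis .
        qed
        have gl: "norm (g (xe i (real i)) (y i) - g (xs i (real i)) (y i))
            \<le> KK * Q ^ F * norm (xe i (real i) - xs i (real i))"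
          by (rule mvt_bound[OF Dg Dgb be bs])
        have QF: "Q ^ F \<le> Q ^ (F + E)" and QE: "P ^ E \<le> Q ^ E" and QFE1: "1 \<le> Q ^ (F + E)"
          using Q1 P1 PQ by (auto intro: power_increasing power_mono)
        have "norm (xs (Suc i) t) \<le> (norm (g (xs i (real i)) (y i)) + C0) * exp K1"
          using ode_bound[OF f_lip K10 rho0 s1 _ w1 t'] by (simp add: C0_def add.assoc)
        also have "\<dots> \<le> (KK * Q ^ F + C0) * exp K1" using gb[OF bs] by simp
        also have "\<dots> \<le> C' * Q ^ (F + E)"
        proof -
          have "KK * Q ^ F \<le> KK * Q ^ (F + E)" using QF KK0 by (simp add: mult_left_mono)
          moreover have "C0 \<le> C0 * Q ^ (F + E)" using QFE1 C00 by (simp add: mult_le_cancel_left1)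
          ultimately have "KK * Q ^ F + C0 \<le> (KK + C0) * Q ^ (F + E)"
            by (simp add: distrib_right)
          then have "(KK * Q ^ F + C0) * exp K1 \<le> ((KK + C0) * Q ^ (F + E)) * exp K1"
            by (rule mult_right_mono) simp
          then have "(KK * Q ^ F + C0) * exp K1 \<le> ((KK + C0) * exp K1) * Q ^ (F + E)"
            by (simp add: mult_ac)
          also have "\<dots> \<le> C' * Q ^ (F + E)"
            using KK0 C C00 Q1 by (intro mult_right_mono) (auto simp: C'_def)
          finally show ?thesis .
        qed
        finally show "norm (xs (Suc i) t) \<le> C' * Pi (Suc i) y ^ (F + E)" by (simp add: Q_def)
        have "norm (xe (Suc i) t) \<le> (norm (g (xe i (real i)) (y i)) + C0) * exp K1"
          using ode_bound[OF f_lip K10 rho0 s2 _ w2 t'] by (simp add: C0_def add.assoc)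
        also have "\<dots> \<le> (KK * Q ^ F + C0) * exp K1" using gb[OF be] by simp
        also have "\<dots> \<le> C' * Q ^ (F + E)"
        proof -
          have "KK * Q ^ F \<le> KK * Q ^ (F + E)" using QF KK0 by (simp add: mult_left_mono)
          moreover have "C0 \<le> C0 * Q ^ (F + E)" using QFE1 C00 by (simp add: mult_le_cancel_left1)
          ultimately have "KK * Q ^ F + C0 \<le> (KK + C0) * Q ^ (F + E)"
            by (simp add: distrib_right)
          then have "(KK * Q ^ F + C0) * exp K1 \<le> ((KK + C0) * Q ^ (F + E)) * exp K1"
            by (rule mult_right_mono) simp
          then have "(KK * Q ^ F + C0) * exp K1 \<le> ((KK + C0) * exp K1) * Q ^ (F + E)"
            by (simp add: mult_ac)
          also have "\<dots> \<le> C' * Q ^ (F + E)"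
            using KK0 C C00 Q1 by (intro mult_right_mono) (auto simp: C'_def)
          finally show ?thesis .
        qed
        finally show "norm (xe (Suc i) t) \<le> C' * Pi (Suc i) y ^ (F + E)" by (simp add: Q_def)
        have hb: "norm (needle u \<tau> v \<epsilon> s - u s) \<le> (\<lambda>_. 0::real) s" if "s \<in> {real i..real i + 1}" for s
          using that i1 tau ueq[of s u \<epsilon>] by simp
        have "norm (xe (Suc i) t - xs (Suc i) t)
            \<le> (norm (g (xe i (real i)) (y i) - g (xs i (real i)) (y i)) + K1 * 0) * exp K1"
          by (rule ode_diff[OF f_lip K10 s2 s1 _ w2 w1 hb _ _ _ t']) auto
        also have "\<dots> \<le> (KK * Q ^ F * (\<epsilon> * (C * P ^ E))) * exp K1"
        proof -
          have "KK * Q ^ F * norm (xe i (real i) - xs i (real i)) \<le> KK * Q ^ F * (\<epsilon> * (C * P ^ E))"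
            using bd KK0 Q1 by (intro mult_left_mono) auto
          then show ?thesis using gl by (intro mult_right_mono) auto
        qed
        also have "\<dots> \<le> (KK * Q ^ F * (\<epsilon> * (C * Q ^ E))) * exp K1"
          using QE KK0 C e Q1 by (intro mult_right_mono mult_left_mono) auto
        also have "\<dots> = \<epsilon> * (KK * C * exp K1) * Q ^ (F + E)"
          by (simp add: power_add mult_ac)
        also have "\<dots> \<le> \<epsilon> * C' * Q ^ (F + E)"
          using e Q1 C00 KK0 C by (intro mult_right_mono mult_left_mono) (auto simp: C'_def)
        finally show "norm (xe (Suc i) t - xs (Suc i) t) \<le> \<epsilon> * (C' * Pi (Suc i) y ^ (F + E))"
          by (simp add: Q_def mult.assoc)
      qed
    qed
  qed
  have cost: "\<exists>Cc Ec. 0 < Cc \<and> (\<forall>u \<epsilon> y xs xe. Adm u \<epsilon> y xs xe \<longrightarrow> (\<forall>t\<in>{real i - 1..real i}.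
      needle u \<tau> v \<epsilon> t = u t \<longrightarrow>
      \<bar>c (xe i t) (needle u \<tau> v \<epsilon> t) - c (xs i t) (u t)\<bar> \<le> \<epsilon> * (Cc * Pi i y ^ Ec)))"
    if i1: "1 \<le> i" and iT: "i \<le> T" for i
  proof -
    obtain C E where C: "0 < C" and H: "\<And>u \<epsilon> y xs xe t. Adm u \<epsilon> y xs xe \<Longrightarrow> t\<in>{real i - 1..real i} \<Longrightarrow>
        norm (xs i t) \<le> C * Pi i y ^ E \<and> norm (xe i t) \<le> C * Pi i y ^ E
        \<and> norm (xe i t - xs i t) \<le> \<epsilon> * (C * Pi i y ^ E)"
      using main[OF i1 iT] by blast
    define KC where "KC = (K6 + K7) * (1 + C) ^ L3"
    have KC0: "0 \<le> KC" using K67 C by (simp add: KC_def)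
    show ?thesis
    proof (intro exI[of _ "KC * C + 1"] exI[of _ "E * L3 + 1 + E"] conjI allI impI ballI)
      have "0 \<le> KC * C" using KC0 C by simp
      then show "0 < KC * C + 1" by linarith
      fix u \<epsilon> y xs xe t assume A: "Adm u \<epsilon> y xs xe" and t: "t \<in> {real i - 1..real i}"
        and nu: "needle u \<tau> v \<epsilon> t = u t"
      define P where "P = Pi i y"
      have P1: "1 \<le> P" using Pi1 by (simp add: P_def)
      have bs: "norm (xs i t) \<le> C * P ^ E" and be: "norm (xe i t) \<le> C * P ^ E"
        and bd: "norm (xe i t - xs i t) \<le> \<epsilon> * (C * P ^ E)"
        using H[OF A t] by (auto simp: P_def)
      have e: "0 \<le> \<epsilon>" using A by (auto simp: Adm_def)
      have ut: "norm (u t) \<le> \<rho>max" using uB[OF A] t i1 iT by auto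
      have Dcb: "norm (Dc z (u t)) \<le> KC * P ^ (E * L3 + 1)" if "norm z \<le> C * P ^ E" for z
      proof -
        have "norm (Dc z (u t)) \<le> K6 + K7 * norm z ^ L3" by (rule Dc_bound[OF ut])
        also have "\<dots> = K6 + K7 * norm z ^ L3 + 0 * (0::real) ^ 1 + 0 * norm z ^ L3 * (0::real) ^ 1" by simp
        also have "\<dots> \<le> (K6 + K7 + 0 + 0) * (1 + C) ^ L3 * (P * (1 + 0)) ^ (E * L3 + 1)"
          by (rule poly_step) (use K67 that P1 C in auto)
        finally show ?thesis by (simp add: KC_def)
      qed
      have "\<bar>c (xe i t) (u t) - c (xs i t) (u t)\<bar> \<le> KC * P ^ (E * L3 + 1) * norm (xe i t - xs i t)"
        using mvt_bound[OF Dc Dcb be bs] by simp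
      also have "\<dots> \<le> KC * P ^ (E * L3 + 1) * (\<epsilon> * (C * P ^ E))"
        using bd KC0 P1 by (intro mult_left_mono) auto
      also have "\<dots> = \<epsilon> * (KC * C) * P ^ (E * L3 + 1 + E)"
        by (simp add: power_add mult_ac)
      also have "\<dots> \<le> \<epsilon> * (KC * C + 1) * P ^ (E * L3 + 1 + E)"
        using e P1 by (intro mult_right_mono mult_left_mono) auto
      finally show "\<bar>c (xe i t) (needle u \<tau> v \<epsilon> t) - c (xs i t) (u t)\<bar> \<le> \<epsilon> * ((KC * C + 1) * Pi i y ^ (E * L3 + 1 + E))"
        using nu by (simp add: P_def mult.assoc)
    qed
  qed
  have "\<forall>i. \<exists>Cc Ec. 1 \<le> i \<and> i \<le> T \<longrightarrow> 0 < Cc \<and> (\<forall>u \<epsilon> y xs xe. Adm u \<epsilon> y xs xe \<longrightarrow> (\<forall>t\<in>{real i - 1..real i}.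
      needle u \<tau> v \<epsilon> t = u t \<longrightarrow>
      \<bar>c (xe i t) (needle u \<tau> v \<epsilon> t) - c (xs i t) (u t)\<bar> \<le> \<epsilon> * (Cc * Pi i y ^ Ec)))"
    using cost by blast
  then obtain CC EE where CE: "\<And>i. 1 \<le> i \<Longrightarrow> i \<le> T \<Longrightarrow> 0 < CC i \<and> (\<forall>u \<epsilon> y xs xe. Adm u \<epsilon> y xs xe \<longrightarrow> (\<forall>t\<in>{real i - 1..real i}.
      needle u \<tau> v \<epsilon> t = u t \<longrightarrow>
      \<bar>c (xe i t) (needle u \<tau> v \<epsilon> t) - c (xs i t) (u t)\<bar> \<le> \<epsilon> * (CC i * Pi i y ^ EE i)))"
    by metis
  show ?thesis
  proof (intro exI[of _ "CC 1"] exI[of _ "\<lambda>i. Lists (i - 1) (EE i)"]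
      exI[of _ "\<lambda>i js. CC i * 2 ^ (EE i * (i - 1))"] conjI)
    show "0 < CC 1" using CE[of 1] T_pos by simp
    show "\<forall>i\<in>{2..T}. finite (Lists (i - 1) (EE i)) \<and> (\<forall>js\<in>Lists (i - 1) (EE i). length js = i - 1 \<and> 0 < CC i * 2 ^ (EE i * (i - 1)))"
      using CE finite_Lists by (auto simp: Lists_def)
  next
    show "\<forall>u \<in> admissible_controls (real T) \<rho>max. continuous (at_left \<tau>) u \<longrightarrow>
      (\<forall>(y :: nat \<Rightarrow> real^'ny) (\<epsilon>::real) xs xe.
         0 \<le> \<epsilon> \<longrightarrow> \<epsilon> \<le> \<tau> \<longrightarrow>
         hybrid_trajectory f g T u x0 y xs \<longrightarrow>
         hybrid_trajectory f g T (needle u \<tau> v \<epsilon>) x0 y xe \<longrightarrow>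
         (\<forall>t\<in>{\<tau><..1}. \<bar>c (xe 1 t) (needle u \<tau> v \<epsilon> t) - c (xs 1 t) (u t)\<bar> \<le> \<epsilon> * CC 1) \<and>
         (\<forall>i\<in>{2..T}. \<forall>t\<in>{real i - 1..real i}.
            \<bar>c (xe i t) (needle u \<tau> v \<epsilon> t) - c (xs i t) (u t)\<bar>
              \<le> \<epsilon> * (\<Sum>js\<in>Lists (i - 1) (EE i). CC i * 2 ^ (EE i * (i - 1)) * (\<Prod>m<i - 1. norm (y (m + 1)) ^ (js ! m)))))"
  proof (intro ballI impI allI conjI)
    fix u y \<epsilon> xs xe
    assume u: "u \<in> admissible_controls (real T) \<rho>max" and e0: "0 \<le> \<epsilon>" and e1: "\<epsilon> \<le> \<tau>"
      and h1: "hybrid_trajectory f g T u x0 y xs"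
      and h2: "hybrid_trajectory f g T (needle u \<tau> v \<epsilon>) x0 y xe"
    have A: "Adm u \<epsilon> y xs xe" using u e0 e1 h1 h2 by (simp add: Adm_def)
    fix t assume t: "t \<in> {\<tau><..1}"
    show "\<bar>c (xe 1 t) (needle u \<tau> v \<epsilon> t) - c (xs 1 t) (u t)\<bar> \<le> \<epsilon> * CC 1"
    proof -
      have "t \<in> {real 1 - 1..real 1}" using t tau by auto
      moreover have "needle u \<tau> v \<epsilon> t = u t" using t ueq by simp
      ultimately have "\<bar>c (xe 1 t) (needle u \<tau> v \<epsilon> t) - c (xs 1 t) (u t)\<bar> \<le> \<epsilon> * (CC 1 * Pi 1 y ^ EE 1)"
        using CE[of 1] T_pos A by blast
      then show ?thesis by (simp add: Pi_def)
    qed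
  next
    fix u y \<epsilon> xs xe i t
    assume u: "u \<in> admissible_controls (real T) \<rho>max" and e0: "0 \<le> \<epsilon>" and e1: "\<epsilon> \<le> \<tau>"
      and h1: "hybrid_trajectory f g T u x0 y xs"
      and h2: "hybrid_trajectory f g T (needle u \<tau> v \<epsilon>) x0 y xe"
    have A: "Adm u \<epsilon> y xs xe" using u e0 e1 h1 h2 by (simp add: Adm_def)
      assume i: "i \<in> {2..T}" and t: "t \<in> {real i - 1..real i}"
      have "\<tau> < t" using i t tau by auto
      then have nu: "needle u \<tau> v \<epsilon> t = u t" using ueq by simp
      have CCi: "0 < CC i" using CE[of i] i by simp
      have "\<bar>c (xe i t) (needle u \<tau> v \<epsilon> t) - c (xs i t) (u t)\<bar> \<le> \<epsilon> * (CC i * Pi i y ^ EE i)"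
        using CE[of i] i A t nu by auto
      also have "\<dots> \<le> \<epsilon> * (CC i * (2 ^ (EE i * (i - 1)) * (\<Sum>js\<in>Lists (i - 1) (EE i). \<Prod>m<i - 1. norm (y (m + 1)) ^ (js ! m))))"
        unfolding Pi_def using e0 CCi
        by (intro mult_left_mono Pi_bound) auto
      also have "\<dots> = \<epsilon> * (\<Sum>js\<in>Lists (i - 1) (EE i). CC i * 2 ^ (EE i * (i - 1)) * (\<Prod>m<i - 1. norm (y (m + 1)) ^ (js ! m)))"
        by (simp add: sum_distrib_left mult.assoc)
      finally show "\<bar>c (xe i t) (needle u \<tau> v \<epsilon> t) - c (xs i t) (u t)\<bar>
              \<le> \<epsilon> * (\<Sum>js\<in>Lists (i - 1) (EE i). CC i * 2 ^ (EE i * (i - 1)) * (\<Prod>m<i - 1. norm (y (m + 1)) ^ (js ! m)))" .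
  qed
  qed
qed

end
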